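(* Consider the two-dimensional Grover walk on $\mathbb{Z}^2$ with a four-level coin, whose real amplitudes $\alpha_{x,y,c'}(t)$ ($x,y\in\mathbb{Z}$, $c'\in\{0,1,2,3\}$, $t\in\mathbb{Z}_{\ge 0}$) evolve by \[ \alpha_{x,y,0}(t+1)=\sum_{j=0}^3 G_{0j}\alpha_{x+1,y+1,j}(t),\quad \alpha_{x,y,1}(t+1)=\sum_{j=0}^3 G_{1j}\alpha_{x+1,y-1,j}(t), \] \[ \alpha_{x,y,2}(t+1)=\sum_{j=0}^3 G_{2j}\alpha_{x-1,y+1,j}(t),\quad \alpha_{x,y,3}(t+1)=\sum_{j=0}^3 G_{3j}\alpha_{x-1,y-1,j}(t), \] where $G=(G_{ij})_{i,j=0}^3=\frac12\begin{pmatrix}-1&1&1&1\\1&-1&1&1\\1&1&-1&1\\1&1&1&-1\end{pmatrix}$. Suppose the walker starts at the origin with initial amplitudes $\alpha_{0,0,0}(0)=1/2$, $\alpha_{0,0,1}(0)=-1/2$, $\alpha_{0,0,2}(0)=-1/2$, $\alpha_{0,0,3}(0)=1/2$, and $\alpha_{x,y,c'}(0)=0$ for $(x,y)\neq(0,0)$. Then for all $t\ge 0$ and all $(x,y)\in\mathbb{Z}^2$, \[ \alpha_{x-1,y,0}(t)+\alpha_{x-1,y,1}(t)+\alpha_{x+1,y,2}(t)+\alpha_{x+1,y,3}(t)=0, \] \[ \alpha_{x,y-1,0}(t)+\alpha_{x,y-1,2}(t)+\alpha_{x,y+1,1}(t)+\alpha_{x,y+1,3}(t)=0. \]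
   Context: The Grover walk state at time $t$ is $\sum_{x,y,c'}\alpha_{x,y,c'}(t)|x,y\rangle\otimes|c'\rangle$; one time step applies the Grover coin $G$ to the coin and then moves the walker according to the coin state: $|0\rangle$ left-down $(x-1,y-1)$, $|1\rangle$ left-up $(x-1,y+1)$, $|2\rangle$ right-down $(x+1,y-1)$, $|3\rangle$ right-up $(x+1,y+1)$; this is equivalent to the recursions stated. *)

theory Defs
  imports Complex_Main
begin

definition grover :: "nat \<Rightarrow> nat \<Rightarrow> real" where
  "grover i j = (if i = j then -1/2 else 1/2)"

definition grover_walk :: "(nat \<Rightarrow> int \<Rightarrow> int \<Rightarrow> nat \<Rightarrow> real) \<Rightarrow> bool" where
  "grover_walk a \<longleftrightarrow> (\<forall>t x y.
     a (Suc t) x y 0 = (\<Sum>j\<le>3. grover 0 j * a t (x+1) (y+1) j) \<and>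
     a (Suc t) x y 1 = (\<Sum>j\<le>3. grover 1 j * a t (x+1) (y-1) j) \<and>
     a (Suc t) x y 2 = (\<Sum>j\<le>3. grover 2 j * a t (x-1) (y+1) j) \<and>
     a (Suc t) x y 3 = (\<Sum>j\<le>3. grover 3 j * a t (x-1) (y-1) j))"

end

theory Submission
  imports Defs
begin

lemma step_expl:
  assumes "grover_walk a"
  shows "a (Suc t) x y 0 = (- a t (x+1) (y+1) 0 + a t (x+1) (y+1) 1 + a t (x+1) (y+1) 2 + a t (x+1) (y+1) 3)/2"
    "a (Suc t) x y 1 = (a t (x+1) (y-1) 0 - a t (x+1) (y-1) 1 + a t (x+1) (y-1) 2 + a t (x+1) (y-1) 3)/2"
    "a (Suc t) x y 2 = (a t (x-1) (y+1) 0 + a t (x-1) (y+1) 1 - a t (x-1) (y+1) 2 + a t (x-1) (y+1) 3)/2"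
    "a (Suc t) x y 3 = (a t (x-1) (y-1) 0 + a t (x-1) (y-1) 1 + a t (x-1) (y-1) 2 - a t (x-1) (y-1) 3)/2"
proof -
  have w: "\<forall>t x y.
     a (Suc t) x y 0 = (\<Sum>j\<le>3. grover 0 j * a t (x+1) (y+1) j) \<and>
     a (Suc t) x y 1 = (\<Sum>j\<le>3. grover 1 j * a t (x+1) (y-1) j) \<and>
     a (Suc t) x y 2 = (\<Sum>j\<le>3. grover 2 j * a t (x-1) (y+1) j) \<and>
     a (Suc t) x y 3 = (\<Sum>j\<le>3. grover 3 j * a t (x-1) (y-1) j)"
    using assms unfolding grover_walk_def by blast
  have s: "\<And>f::nat\<Rightarrow>real. (\<Sum>j\<le>3. f j) = f 0 + f 1 + f 2 + f 3"
    by (simp add: numeral_3_eq_3 numeral_2_eq_2 atMost_Suc)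
  have g: "grover 0 0 = -1/2" "grover 1 1 = -1/2" "grover 2 2 = -1/2" "grover 3 3 = -1/2"
    "grover 0 1 = 1/2" "grover 0 2 = 1/2" "grover 0 3 = 1/2"
    "grover 1 0 = 1/2" "grover 1 2 = 1/2" "grover 1 3 = 1/2"
    "grover 2 0 = 1/2" "grover 2 1 = 1/2" "grover 2 3 = 1/2"
    "grover 3 0 = 1/2" "grover 3 1 = 1/2" "grover 3 2 = 1/2"
    by (simp_all add: grover_def)
  from w[rule_format, of t x y] show
    "a (Suc t) x y 0 = (- a t (x+1) (y+1) 0 + a t (x+1) (y+1) 1 + a t (x+1) (y+1) 2 + a t (x+1) (y+1) 3)/2"
    "a (Suc t) x y 1 = (a t (x+1) (y-1) 0 - a t (x+1) (y-1) 1 + a t (x+1) (y-1) 2 + a t (x+1) (y-1) 3)/2"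
    "a (Suc t) x y 2 = (a t (x-1) (y+1) 0 + a t (x-1) (y+1) 1 - a t (x-1) (y+1) 2 + a t (x-1) (y+1) 3)/2"
    "a (Suc t) x y 3 = (a t (x-1) (y-1) 0 + a t (x-1) (y-1) 1 + a t (x-1) (y-1) 2 - a t (x-1) (y-1) 3)/2"
    unfolding s g by (simp_all add: field_simps)
qed

theorem lemma1:
  fixes a :: "nat \<Rightarrow> int \<Rightarrow> int \<Rightarrow> nat \<Rightarrow> real"
  assumes walk: "grover_walk a"
    and init0: "a 0 0 0 0 = 1/2" and init1: "a 0 0 0 1 = -1/2"
    and init2: "a 0 0 0 2 = -1/2" and init3: "a 0 0 0 3 = 1/2"
    and init_else: "\<And>x y c. (x, y) \<noteq> (0, 0) \<Longrightarrow> c \<le> 3 \<Longrightarrow> a 0 x y c = 0"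
  shows "\<forall>t x y.
           a t (x-1) y 0 + a t (x-1) y 1 + a t (x+1) y 2 + a t (x+1) y 3 = 0 \<and>
           a t x (y-1) 0 + a t x (y-1) 2 + a t x (y+1) 1 + a t x (y+1) 3 = 0"
proof
  fix t show "\<forall>x y.
           a t (x-1) y 0 + a t (x-1) y 1 + a t (x+1) y 2 + a t (x+1) y 3 = 0 \<and>
           a t x (y-1) 0 + a t x (y-1) 2 + a t x (y+1) 1 + a t x (y+1) 3 = 0"
  proof (induction t)
    case 0
    have z: "\<And>x y c. c \<le> 3 \<Longrightarrow> a 0 x y c = (if x = 0 \<and> y = 0 then a 0 0 0 c else 0)"
      using init_else by auto
    show ?case
    proof (intro allI conjI)
      fix x y :: int
      show "a 0 (x-1) y 0 + a 0 (x-1) y 1 + a 0 (x+1) y 2 + a 0 (x+1) y 3 = 0"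
        by (subst (1 2 3 4) z) (use init0 init1 init2 init3 in \<open>auto simp: numeral_2_eq_2 numeral_3_eq_3\<close>)
      show "a 0 x (y-1) 0 + a 0 x (y-1) 2 + a 0 x (y+1) 1 + a 0 x (y+1) 3 = 0"
        by (subst (1 2 3 4) z) (use init0 init1 init2 init3 in \<open>auto simp: numeral_2_eq_2 numeral_3_eq_3\<close>)
    qed
  next
    case (Suc t)
    show ?case
    proof (intro allI conjI)
      fix x y :: int
      have h1: "a t x (y-1) 0 + a t x (y-1) 2 + a t x (y+1) 1 + a t x (y+1) 3 = 0"
        using Suc by blast
      have h2: "a t (x-1) y 0 + a t (x-1) y 1 + a t (x+1) y 2 + a t (x+1) y 3 = 0"
        using Suc by blast
      show "a (Suc t) (x-1) y 0 + a (Suc t) (x-1) y 1 + a (Suc t) (x+1) y 2 + a (Suc t) (x+1) y 3 = 0"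
        using h1 step_expl(1,2)[OF walk, of t "x-1" y] step_expl(3,4)[OF walk, of t "x+1" y]
        by simp
      show "a (Suc t) x (y-1) 0 + a (Suc t) x (y-1) 2 + a (Suc t) x (y+1) 1 + a (Suc t) x (y+1) 3 = 0"
        using h2 step_expl(1,3)[OF walk, of t x "y-1"] step_expl(2,4)[OF walk, of t x "y+1"]
        by simp
    qed
  qed
qed

end
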